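(* Let $x_1<x_2<\cdots<x_n$ be a partition, $h_i=x_{i+1}-x_i$ ($1\le i\le n-1$), $\hat h=\max_{1\le i\le n-1}h_i<1$. Let $f\in C^4([x_1,x_n])$ and $L>0$ with $|f^{(4)}(x)|\le L$ for all $x\in[x_1,x_n]$. Write $f_i=f(x_i)$, $f'_i=f'(x_i)$, $m_i=(f_{i+1}-f_i)/h_i$, $\lambda_i=\frac{h_{i+1}}{h_i+h_{i+1}}$, $\mu_i=\frac{h_i}{h_i+h_{i+1}}$. Let $i_0$ be an index with $3-\log_2(\hat h)<i_0<(n-1)+\log_2(\hat h)$, let $p_{i_0},T>0$, and let $\tilde f_{i_0}$ satisfy $|f'_{i_0}-\tilde f_{i_0}|=T\hat h^{p_{i_0}}$. Assume there is $K>0$ with $\hat h/h_i\le K$ for all $i=1,\dots,n-1$. Set $\dot f_1=f'_1$, $\dot f_{i_0}=\tilde f_{i_0}$, $\dot f_n=f'_n$, and let the remaining values $\dot f_i$ ($2\le i\le n-1$, $i\ne i_0$) be the solution of the linear system $$\lambda_{i-1}\dot f_{i-1}+2\dot f_i+\mu_{i-1}\dot f_{i+1}=3(\lambda_{i-1}m_{i-1}+\mu_{i-1}m_i),\qquad 2\le i\le n-1,\ i\ne i_0.$$ Then there exist integers $l_0<i_0<l_1$ such that $$|\dot f_i-f'_i|=\begin{cases}O(\hat h^{\min(3,p_{i_0}+1)}),&2\le i\le l_0,\\ O(\hat h^{p_{i_0}}),& l_0<i<l_1,\\ O(\hat h^{\min(3,p_{i_0}+1)}),& l_1\le i\le n-1.\end{cases}$$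 Moreover, the piecewise cubic Hermite interpolant $P$ built with the derivative values $\dot f_1,\dots,\dot f_n$ (on each $[x_i,x_{i+1}]$, $P$ is the cubic with $P(x_i)=f_i$, $P(x_{i+1})=f_{i+1}$, $P'(x_i)=\dot f_i$, $P'(x_{i+1})=\dot f_{i+1}$) has $C^2$ regularity on $[x_1,x_n]$ except at the point $x_{i_0}$.
   Context: $O(\hat h^q)$ denotes a quantity bounded in absolute value by $C\hat h^q$ with $C$ independent of the partition (it may depend on $f$, $L$, $K$, $T$). *)

theory Defs
  imports "HOL-Analysis.Analysis"
begin

definition step :: "(nat \<Rightarrow> real) \<Rightarrow> nat \<Rightarrow> real" where
  "step x i = x (Suc i) - x i"

definition hmax :: "(nat \<Rightarrow> real) \<Rightarrow> nat \<Rightarrow> real" where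
  "hmax x n = Max (step x ` {1..n-1})"

text \<open>The cubic Hermite piece on [x i, x (i+1)] with values fv, derivative values dv:
  the cubic with P(x_i)=f_i, P(x_{i+1})=f_{i+1}, P'(x_i)=dv_i, P'(x_{i+1})=dv_{i+1}.\<close>
definition hermite_piece ::
  "(nat \<Rightarrow> real) \<Rightarrow> (nat \<Rightarrow> real) \<Rightarrow> (nat \<Rightarrow> real) \<Rightarrow> nat \<Rightarrow> real \<Rightarrow> real" where
  "hermite_piece x fv dv i t =
     (let h = step x i; s = (t - x i) / h in
        fv i * (2 * s ^ 3 - 3 * s ^ 2 + 1) + h * dv i * (s ^ 3 - 2 * s ^ 2 + s)
      + fv (Suc i) * (-2 * s ^ 3 + 3 * s ^ 2) + h * dv (Suc i) * (s ^ 3 - s ^ 2))"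

definition piece_index :: "(nat \<Rightarrow> real) \<Rightarrow> nat \<Rightarrow> real \<Rightarrow> nat" where
  "piece_index x n t =
     (if t < x n then (GREATEST i. 1 \<le> i \<and> i < n \<and> x i \<le> t) else n - 1)"

definition pchip ::
  "(nat \<Rightarrow> real) \<Rightarrow> nat \<Rightarrow> (nat \<Rightarrow> real) \<Rightarrow> (nat \<Rightarrow> real) \<Rightarrow> real \<Rightarrow> real" where
  "pchip x n fv dv t = hermite_piece x fv dv (piece_index x n t) t"

end

theory Submission
  imports Defs
begin

lemma step_bound:
  fixes g g' :: "real \<Rightarrow> real" and a b c M :: real and k :: nat
  assumes c: "c \<in> {a..b}"
    and d: "\<And>s. s \<in> {a..b} \<Longrightarrow> (g has_real_derivative g' s) (at s within {a..b})"
    and g0: "g c = 0" and M0: "M \<ge> 0"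
    and bd: "\<And>s. s \<in> {a..b} \<Longrightarrow> \<bar>g' s\<bar> \<le> M * \<bar>s - c\<bar> ^ k"
    and t: "t \<in> {a..b}"
  shows "\<bar>g t\<bar> \<le> M * \<bar>t - c\<bar> ^ Suc k"
proof -
  let ?S = "{min c t..max c t}"
  have sub: "?S \<subseteq> {a..b}" using c t by auto
  have "norm (g t - g c) \<le> (M * \<bar>t - c\<bar> ^ k) * norm (t - c)"
  proof (rule field_differentiable_bound[of ?S])
    show "convex ?S" by simp
    show "(g has_field_derivative g' z) (at z within ?S)" if "z \<in> ?S" for z
      using d[of z] sub that by (meson has_field_derivative_subset subsetD)
    show "norm (g' z) \<le> M * \<bar>t - c\<bar> ^ k" if "z \<in> ?S" for z
    proof -
      have "\<bar>z - c\<bar> \<le> \<bar>t - c\<bar>" using that by auto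
      hence "\<bar>z - c\<bar> ^ k \<le> \<bar>t - c\<bar> ^ k" by (simp add: power_mono)
      hence "M * \<bar>z - c\<bar> ^ k \<le> M * \<bar>t - c\<bar> ^ k" using M0 by (rule mult_left_mono)
      moreover have "z \<in> {a..b}" using that sub by blast
      ultimately show ?thesis using bd[of z] by simp
    qed
  qed auto
  thus ?thesis using g0 by (simp add: mult_ac)
qed


lemma taylor_bounds:
  fixes Df :: "nat \<Rightarrow> real \<Rightarrow> real" and a b L c t :: real
  assumes deriv: "\<And>k t. k < 4 \<Longrightarrow> t \<in> {a..b} \<Longrightarrow>
                 (Df k has_real_derivative Df (Suc k) t) (at t within {a..b})"
    and bound4: "\<And>t. t \<in> {a..b} \<Longrightarrow> \<bar>Df 4 t\<bar> \<le> L"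
    and c: "c \<in> {a..b}" and t: "t \<in> {a..b}"
  shows "\<bar>Df 1 t - (Df 1 c + Df 2 c * (t-c) + Df 3 c * (t-c)^2/2)\<bar> \<le> L * \<bar>t-c\<bar>^3"
    and "\<bar>Df 0 t - (Df 0 c + Df 1 c * (t-c) + Df 2 c * (t-c)^2/2 + Df 3 c * (t-c)^3/6)\<bar> \<le> L * \<bar>t-c\<bar>^4"
proof -
  have L0: "L \<ge> 0" using bound4[OF c] by linarith
  define g3 where "g3 s = Df 3 s - Df 3 c" for s
  define g2 where "g2 s = Df 2 s - (Df 2 c + Df 3 c * (s-c))" for s
  define g1 where "g1 s = Df 1 s - (Df 1 c + Df 2 c * (s-c) + Df 3 c * (s-c)^2/2)" for s
  define g0 where "g0 s = Df 0 s - (Df 0 c + Df 1 c * (s-c) + Df 2 c * (s-c)^2/2 + Df 3 c * (s-c)^3/6)" for s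
  have d3: "(g3 has_real_derivative Df 4 s) (at s within {a..b})" if "s \<in> {a..b}" for s
    unfolding g3_def using deriv[of 3 s] that by (auto intro!: derivative_eq_intros simp: eval_nat_numeral)
  have d2: "(g2 has_real_derivative g3 s) (at s within {a..b})" if "s \<in> {a..b}" for s
    unfolding g2_def g3_def using deriv[of 2 s] that by (auto intro!: derivative_eq_intros simp: eval_nat_numeral)
  have d1: "(g1 has_real_derivative g2 s) (at s within {a..b})" if "s \<in> {a..b}" for s
    unfolding g1_def g2_def using deriv[of 1 s] that
    by (auto intro!: derivative_eq_intros simp: power2_eq_square field_simps eval_nat_numeral)
  have d0: "(g0 has_real_derivative g1 s) (at s within {a..b})" if "s \<in> {a..b}" for s
    unfolding g0_def g1_def using deriv[of 0 s] that
    by (auto intro!: derivative_eq_intros simp: power2_eq_square field_simps eval_nat_numeral)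
  have b3: "\<bar>g3 s\<bar> \<le> L * \<bar>s - c\<bar> ^ Suc 0" if "s \<in> {a..b}" for s
    by (rule step_bound[OF c d3 _ _ _ that]) (auto simp: g3_def bound4 L0)
  have b2: "\<bar>g2 s\<bar> \<le> L * \<bar>s - c\<bar> ^ Suc (Suc 0)" if "s \<in> {a..b}" for s
    by (rule step_bound[OF c d2 _ _ b3 that]) (auto simp: g2_def L0)
  have b1: "\<bar>g1 s\<bar> \<le> L * \<bar>s - c\<bar> ^ Suc (Suc (Suc 0))" if "s \<in> {a..b}" for s
    by (rule step_bound[OF c d1 _ _ b2 that]) (auto simp: g1_def L0)
  have b0: "\<bar>g0 s\<bar> \<le> L * \<bar>s - c\<bar> ^ Suc (Suc (Suc (Suc 0)))" if "s \<in> {a..b}" for s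
    by (rule step_bound[OF c d0 _ _ b1 that]) (auto simp: g0_def L0)
  show "\<bar>Df 1 t - (Df 1 c + Df 2 c * (t-c) + Df 3 c * (t-c)^2/2)\<bar> \<le> L * \<bar>t-c\<bar>^3"
    using b1[OF t] by (simp add: g1_def numeral_eq_Suc)
  show "\<bar>Df 0 t - (Df 0 c + Df 1 c * (t-c) + Df 2 c * (t-c)^2/2 + Df 3 c * (t-c)^3/6)\<bar> \<le> L * \<bar>t-c\<bar>^4"
    using b0[OF t] by (simp add: g0_def numeral_eq_Suc)
qed


lemma abs_frac_le:
  fixes w z :: real assumes "0 \<le> w" "w \<le> 1" shows "\<bar>w * z\<bar> \<le> \<bar>z\<bar>"
proof -
  have "\<bar>w * z\<bar> = w * \<bar>z\<bar>" using assms by (simp add: abs_mult)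
  also have "\<dots> \<le> \<bar>z\<bar>" using assms by (simp add: mult_left_le_one_le)
  finally show ?thesis .
qed

lemma residual:
  fixes u v h L F0m F0 F0p D1m D1 D1p c2 c3 :: real
  assumes uv: "0 < u" "0 < v" "u \<le> h" "v \<le> h"
    and Ep: "\<bar>F0p - (F0 + D1 * v + c2 * v^2/2 + c3 * v^3/6)\<bar> \<le> L * v^4"
    and Em: "\<bar>F0m - (F0 + D1 * (-u) + c2 * (-u)^2/2 + c3 * (-u)^3/6)\<bar> \<le> L * u^4"
    and Gp: "\<bar>D1p - (D1 + c2 * v + c3 * v^2/2)\<bar> \<le> L * v^3"
    and Gm: "\<bar>D1m - (D1 + c2 * (-u) + c3 * (-u)^2/2)\<bar> \<le> L * u^3"
  shows "\<bar>v/(u+v) * D1m + 2 * D1 + u/(u+v) * D1p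
          - 3 * (v/(u+v) * ((F0 - F0m)/u) + u/(u+v) * ((F0p - F0)/v))\<bar> \<le> 8 * L * h^3"
proof -
  define ep where "ep = F0p - (F0 + D1 * v + c2 * v^2/2 + c3 * v^3/6)"
  define em where "em = F0m - (F0 + D1 * (-u) + c2 * (-u)^2/2 + c3 * (-u)^3/6)"
  define gp where "gp = D1p - (D1 + c2 * v + c3 * v^2/2)"
  define gm where "gm = D1m - (D1 + c2 * (-u) + c3 * (-u)^2/2)"
  have "0 \<le> L * v^3" using Gp by (meson abs_ge_zero order_trans)
  hence L0: "L \<ge> 0" using uv(2) by (simp add: zero_le_mult_iff)
  have eq: "v/(u+v) * D1m + 2 * D1 + u/(u+v) * D1p
          - 3 * (v/(u+v) * ((F0 - F0m)/u) + u/(u+v) * ((F0p - F0)/v))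
        = v/(u+v) * gm + u/(u+v) * gp + 3 * (v/(u+v)) * (em/u) - 3 * (u/(u+v)) * (ep / v)"
  proof -
    have nz: "u \<noteq> 0" "v \<noteq> 0" "u + v \<noteq> 0" using uv by auto
    define lam where "lam = v/(u+v)"
    define mu where "mu = u/(u+v)"
    have "lam + mu = (v+u)/(u+v)" unfolding lam_def mu_def by (simp add: add_divide_distrib)
    hence lm1: "lam + mu = 1" using nz by (simp add: add.commute)
    have lm2: "lam * u = mu * v" unfolding lam_def mu_def by simp
    have m1: "(F0 - F0m)/u = D1 - c2*u/2 + c3*u^2/6 - em/u"
      unfolding em_def using nz by (simp add: field_simps power2_eq_square power3_eq_cube)
    have m2: "(F0p - F0)/v = D1 + c2* v/2 + c3* v^2/6 + ep/v"
      unfolding ep_def using nz by (simp add: field_simps power2_eq_square power3_eq_cube)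
    have d1: "D1m = D1 - c2*u + c3*u^2/2 + gm" unfolding gm_def by (simp add: power2_eq_square)
    have d2: "D1p = D1 + c2* v + c3* v^2/2 + gp" unfolding gp_def by simp
    have key: "lam*(D1 - c2*u + c3*u^2/2 + gm - 3*(D1 - c2*u/2 + c3*u^2/6 - X)) + 2*D1
        + mu*(D1 + c2* v + c3* v^2/2 + gp - 3*(D1 + c2* v/2 + c3* v^2/6 + Y))
      = lam*gm + mu*gp + 3*lam*X - 3*mu*Y + (2*D1)*(1 - (lam+mu)) + c2/2*(lam*u - mu* v)" for X Y
      by (simp add: algebra_simps)
    have "lam * D1m + 2 * D1 + mu * D1p
          - 3 * (lam * ((F0 - F0m)/u) + mu * ((F0p - F0)/v))
        = lam*(D1m - 3*((F0 - F0m)/u)) + 2*D1 + mu*(D1p - 3*((F0p - F0)/v))"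
      by (simp add: algebra_simps)
    also have "\<dots> = lam*gm + mu*gp + 3*lam*(em/u) - 3*mu*(ep/v)"
      unfolding m1 m2 d1 d2 key lm1 lm2 by simp
    finally show ?thesis unfolding lam_def mu_def by simp
  qed
  have lv: "v/(u+v) \<le> 1" "u/(u+v) \<le> 1" "v/(u+v) \<ge> 0" "u/(u+v) \<ge> 0" using uv by auto
  have h0: "h > 0" using uv by simp
  have t1: "\<bar>v/(u+v) * gm\<bar> \<le> L * h^3"
  proof -
    have "\<bar>v/(u+v) * gm\<bar> \<le> \<bar>gm\<bar>" using lv by (intro abs_frac_le) auto
    also have "\<dots> \<le> L * u^3" using Gm gm_def by simp
    also have "\<dots> \<le> L * h^3" using uv L0 by (simp add: mult_left_mono power_mono)
    finally show ?thesis .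
  qed
  have t2: "\<bar>u/(u+v) * gp\<bar> \<le> L * h^3"
  proof -
    have "\<bar>u/(u+v) * gp\<bar> \<le> \<bar>gp\<bar>" using lv by (intro abs_frac_le) auto
    also have "\<dots> \<le> L * v^3" using Gp gp_def by simp
    also have "\<dots> \<le> L * h^3" using uv L0 by (simp add: mult_left_mono power_mono)
    finally show ?thesis .
  qed
  have t3: "\<bar>3 * (v/(u+v)) * (em/u)\<bar> \<le> 3 * (L * h^3)"
  proof -
    have "\<bar>3 * (v/(u+v)) * (em/u)\<bar> \<le> 3 * \<bar>em/u\<bar>" using lv abs_frac_le[of "v/(u+v)" "em/u"] by (simp add: abs_mult)
    also have "\<bar>em/u\<bar> \<le> L * u^3"
    proof -
      have "\<bar>em\<bar> \<le> L * u^4" using Em em_def by simp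
      hence "\<bar>em\<bar> / u \<le> L * u^4 / u" using uv by (simp add: divide_right_mono)
      moreover have "L * u^4 / u = L * u^3" using uv by (simp add: power_Suc numeral_eq_Suc)
      ultimately show ?thesis using uv by simp
    qed
    also have "L * u^3 \<le> L * h^3" using uv L0 by (simp add: mult_left_mono power_mono)
    finally show ?thesis by simp
  qed
  have t4: "\<bar>3 * (u/(u+v)) * (ep/v)\<bar> \<le> 3 * (L * h^3)"
  proof -
    have "\<bar>3 * (u/(u+v)) * (ep/v)\<bar> \<le> 3 * \<bar>ep/v\<bar>" using lv abs_frac_le[of "u/(u+v)" "ep/v"] by (simp add: abs_mult)
    also have "\<bar>ep/v\<bar> \<le> L * v^3"
    proof -
      have "\<bar>ep\<bar> \<le> L * v^4" using Ep ep_def by simp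
      hence "\<bar>ep\<bar> / v \<le> L * v^4 / v" using uv by (simp add: divide_right_mono)
      moreover have "L * v^4 / v = L * v^3" using uv by (simp add: power_Suc numeral_eq_Suc)
      ultimately show ?thesis using uv by simp
    qed
    also have "L * v^3 \<le> L * h^3" using uv L0 by (simp add: mult_left_mono power_mono)
    finally show ?thesis by simp
  qed
  show ?thesis unfolding eq using t1 t2 t3 t4 by linarith
qed


definition hp1 :: "(nat \<Rightarrow> real) \<Rightarrow> (nat \<Rightarrow> real) \<Rightarrow> (nat \<Rightarrow> real) \<Rightarrow> nat \<Rightarrow> real \<Rightarrow> real" where
  "hp1 x fv dv i t = (let h = step x i; s = (t - x i) / h in
     (fv i * (6 * s^2 - 6 * s) + h * dv i * (3 * s^2 - 4 * s + 1)
      + fv (Suc i) * (6 * s - 6 * s^2) + h * dv (Suc i) * (3 * s^2 - 2 * s)) / h)"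

definition hp2 :: "(nat \<Rightarrow> real) \<Rightarrow> (nat \<Rightarrow> real) \<Rightarrow> (nat \<Rightarrow> real) \<Rightarrow> nat \<Rightarrow> real \<Rightarrow> real" where
  "hp2 x fv dv i t = (let h = step x i; s = (t - x i) / h in
     (fv i * (12 * s - 6) + h * dv i * (6 * s - 4)
      + fv (Suc i) * (6 - 12 * s) + h * dv (Suc i) * (6 * s - 2)) / h^2)"

lemma hp0_deriv:
  assumes "step x i \<noteq> 0"
  shows "(hermite_piece x fv dv i has_real_derivative hp1 x fv dv i t) (at t)"
proof -
  define h where "h = step x i"
  have h: "h \<noteq> 0" using assms h_def by simp
  have e: "hermite_piece x fv dv i = (\<lambda>t. fv i * (2 * ((t - x i)/h) ^ 3 - 3 * ((t - x i)/h) ^ 2 + 1)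
      + h * dv i * (((t - x i)/h) ^ 3 - 2 * ((t - x i)/h) ^ 2 + ((t - x i)/h))
      + fv (Suc i) * (-2 * ((t - x i)/h) ^ 3 + 3 * ((t - x i)/h) ^ 2)
      + h * dv (Suc i) * (((t - x i)/h) ^ 3 - ((t - x i)/h) ^ 2))"
    unfolding hermite_piece_def h_def Let_def by (rule ext) simp
  show ?thesis unfolding e hp1_def Let_def h_def[symmetric]
    using h by (auto intro!: derivative_eq_intros simp: field_simps power2_eq_square power3_eq_cube)
qed

lemma hp1_deriv:
  assumes "step x i \<noteq> 0"
  shows "(hp1 x fv dv i has_real_derivative hp2 x fv dv i t) (at t)"
proof -
  define h where "h = step x i"
  have h: "h \<noteq> 0" using assms h_def by simp
  have e: "hp1 x fv dv i = (\<lambda>t. (fv i * (6 * ((t - x i)/h)^2 - 6 * ((t - x i)/h)) + h * dv i * (3 * ((t - x i)/h)^2 - 4 * ((t - x i)/h) + 1)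
      + fv (Suc i) * (6 * ((t - x i)/h) - 6 * ((t - x i)/h)^2) + h * dv (Suc i) * (3 * ((t - x i)/h)^2 - 2 * ((t - x i)/h))) / h)"
    unfolding hp1_def h_def Let_def by (rule ext) simp
  show ?thesis unfolding e hp2_def Let_def h_def[symmetric]
    using h by (auto intro!: derivative_eq_intros simp: field_simps power2_eq_square power3_eq_cube)
qed

lemma hp2_cont: "step x i \<noteq> 0 \<Longrightarrow> continuous_on UNIV (hp2 x fv dv i)"
  unfolding hp2_def Let_def by (intro continuous_intros) auto

lemma hp_vals:
  assumes "step x i \<noteq> 0"
  shows "hermite_piece x fv dv i (x i) = fv i"
    and "hermite_piece x fv dv i (x (Suc i)) = fv (Suc i)"
    and "hp1 x fv dv i (x i) = dv i"
    and "hp1 x fv dv i (x (Suc i)) = dv (Suc i)"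
    and "hp2 x fv dv i (x i) = (6 * fv (Suc i) - 6 * fv i - 4 * step x i * dv i - 2 * step x i * dv (Suc i)) / (step x i)^2"
    and "hp2 x fv dv i (x (Suc i)) = (6 * fv i - 6 * fv (Suc i) + 2 * step x i * dv i + 4 * step x i * dv (Suc i)) / (step x i)^2"
proof -
  have s1: "(x (Suc i) - x i) / step x i = 1" using assms by (simp add: step_def)
  show "hermite_piece x fv dv i (x i) = fv i" unfolding hermite_piece_def Let_def by simp
  show "hermite_piece x fv dv i (x (Suc i)) = fv (Suc i)" unfolding hermite_piece_def Let_def s1 by simp
  show "hp1 x fv dv i (x i) = dv i" unfolding hp1_def Let_def using assms by simp
  show "hp1 x fv dv i (x (Suc i)) = dv (Suc i)" unfolding hp1_def Let_def s1 using assms by simp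
  show "hp2 x fv dv i (x i) = (6 * fv (Suc i) - 6 * fv i - 4 * step x i * dv i - 2 * step x i * dv (Suc i)) / (step x i)^2"
    unfolding hp2_def Let_def by (simp add: algebra_simps)
  show "hp2 x fv dv i (x (Suc i)) = (6 * fv i - 6 * fv (Suc i) + 2 * step x i * dv i + 4 * step x i * dv (Suc i)) / (step x i)^2"
    unfolding hp2_def Let_def s1 by (simp add: algebra_simps)
qed

lemma node_match:
  fixes u v Fm F Fp dm d dp :: real
  assumes "u > 0" "v > 0"
    and eq: "v/(u+v) * dm + 2 * d + u/(u+v) * dp = 3 * (v/(u+v) * ((F - Fm)/u) + u/(u+v) * ((Fp - F)/v))"
  shows "(6 * Fm - 6 * F + 2 * u * dm + 4 * u * d) / u^2 = (6 * Fp - 6 * F - 4 * v * d - 2 * v * dp) / v^2"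
proof -
  have nz: "u \<noteq> 0" "v \<noteq> 0" "u + v \<noteq> 0" using assms by auto
  have a1: "(u+v) * (v/(u+v) * dm) = v *dm" using nz by simp
  have a2: "(u+v) * (u/(u+v) * dp) = u*dp" using nz by simp
  have a3: "(u+v) * (v/(u+v) * ((F - Fm)/u)) = v *((F - Fm)/u)" using nz by simp
  have a4: "(u+v) * (u/(u+v) * ((Fp - F)/v)) = u*((Fp - F)/v)" using nz by simp
  have "(u+v) * (v/(u+v) * dm + 2 * d + u/(u+v) * dp) = (u+v) * (3 * (v/(u+v) * ((F - Fm)/u) + u/(u+v) * ((Fp - F)/v)))"
    using eq by simp
  hence "(u+v) * (v/(u+v) * dm) + (u+v) * (2 * d) + (u+v) * (u/(u+v) * dp) = 3 * ((u+v) * (v/(u+v) * ((F - Fm)/u)) + (u+v) * (u/(u+v) * ((Fp - F)/v)))"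
    by (simp only: distrib_left mult.left_commute[of "u+v" 3])
  hence G: "v * dm + (u+v) * (2 * d) + u * dp = 3 * (v * ((F - Fm)/u) + u * ((Fp - F)/v))"
    unfolding a1 a2 a3 a4 .
  have H: "u * v * (3 * (v * ((F - Fm)/u) + u * ((Fp - F)/v))) = 3 * (v * v * (F - Fm) + u * u * (Fp - F))"
    using nz by (simp add: field_simps)
  have E: "u * v * (v * dm + (u+v) * (2 * d) + u * dp) = 3 * (v * v * (F - Fm) + u * u * (Fp - F))"
    using G H by simp
  have R: "(6 * Fm - 6 * F + 2 * u * dm + 4 * u * d) * v^2 - (6 * Fp - 6 * F - 4 * v * d - 2 * v * dp) * u^2
     = 2 * (u * v * (v * dm + (u+v) * (2 * d) + u * dp) - 3 * (v * v * (F - Fm) + u * u * (Fp - F)))"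
    by (simp add: algebra_simps power2_eq_square)
  have "(6 * Fm - 6 * F + 2 * u * dm + 4 * u * d) * v^2 = (6 * Fp - 6 * F - 4 * v * d - 2 * v * dp) * u^2"
    using R E by simp
  thus ?thesis using nz by (simp add: frac_eq_eq)
qed


lemma x_mono:
  assumes inc: "\<forall>i\<in>{1..<n}. x i < x (Suc i)" and "1 \<le> i" "i < j" "j \<le> n"
  shows "(x i :: real) < x j"
  using assms(3,4)
proof (induction j)
  case 0 then show ?case by simp
next
  case (Suc j)
  show ?case
  proof (cases "i = j")
    case True then show ?thesis using inc assms(2) Suc.prems by auto
  next
    case False
    hence "x i < x j" using Suc by auto
    also have "x j < x (Suc j)" using inc assms(2) Suc.prems False by auto
    finally show ?thesis .
  qed
qed

lemma x_mono_le:
  assumes inc: "\<forall>i\<in>{1..<n}. x i < x (Suc i)" and "1 \<le> i" "i \<le> j" "j \<le> n"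
  shows "(x i :: real) \<le> x j"
  using x_mono[OF inc, of i j] assms by (cases "i = j") auto

lemma piece_index_eq:
  assumes inc: "\<forall>i\<in>{1..<n}. x i < x (Suc i)" and j: "1 \<le> j" "j < n"
    and t: "x j \<le> t" "t < x (Suc j)"
  shows "piece_index x n t = j"
proof -
  have "x (Suc j) \<le> x n" using x_mono_le[OF inc, of "Suc j" n] j by auto
  hence tn: "t < x n" using t by simp
  have "(GREATEST i. 1 \<le> i \<and> i < n \<and> x i \<le> t) = j"
  proof (rule Greatest_equality)
    show "1 \<le> j \<and> j < n \<and> x j \<le> t" using j t by simp
    fix i assume i: "1 \<le> i \<and> i < n \<and> x i \<le> t"
    show "i \<le> j"
    proof (rule ccontr)
      assume "\<not> i \<le> j"
      hence "x (Suc j) \<le> x i" using x_mono_le[OF inc, of "Suc j" i] i by auto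
      thus False using i t by simp
    qed
  qed
  thus ?thesis unfolding piece_index_def using tn by simp
qed

lemma piece_index_last:
  assumes inc: "\<forall>i\<in>{1..<n}. x i < x (Suc i)" and n: "2 \<le> n"
    and t: "x (n - 1) \<le> t" "t \<le> x n"
  shows "piece_index x n t = n - 1"
proof (cases "t = x n")
  case True then show ?thesis unfolding piece_index_def by simp
next
  case False
  then show ?thesis using piece_index_eq[OF inc, of "n - 1" t] n t by simp
qed

lemma tendsto_glue:
  fixes F g h :: "real \<Rightarrow> real"
  assumes "(g \<longlongrightarrow> l) (at c)" "(h \<longlongrightarrow> l) (at c)" "lo < c" "c < hi"
    and "\<And>t. lo < t \<Longrightarrow> t < c \<Longrightarrow> F t = g t"
    and "\<And>t. c < t \<Longrightarrow> t < hi \<Longrightarrow> F t = h t"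
  shows "(F \<longlongrightarrow> l) (at c)"
  unfolding filterlim_at_split
proof
  have "(g \<longlongrightarrow> l) (at_left c)" using assms(1) by (rule tendsto_mono[OF at_le, rotated]) simp
  moreover have "eventually (\<lambda>t. g t = F t) (at_left c)"
    using eventually_at_left_real[OF assms(3)] by eventually_elim (use assms(5) in auto)
  ultimately show "(F \<longlongrightarrow> l) (at_left c)" using tendsto_cong by metis
next
  have "(h \<longlongrightarrow> l) (at_right c)" using assms(2) by (rule tendsto_mono[OF at_le, rotated]) simp
  moreover have "eventually (\<lambda>t. h t = F t) (at_right c)"
    using eventually_at_right_real[OF assms(4)] by eventually_elim (use assms(6) in auto)
  ultimately show "(F \<longlongrightarrow> l) (at_right c)" using tendsto_cong by metis
qed

lemma deriv_glue:
  fixes F p q :: "real \<Rightarrow> real"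
  assumes p: "(p has_real_derivative D) (at c)" and q: "(q has_real_derivative D) (at c)"
    and "lo < c" "c < hi"
    and Fp: "\<And>t. lo < t \<Longrightarrow> t < c \<Longrightarrow> F t = p t"
    and Fq: "\<And>t. c \<le> t \<Longrightarrow> t < hi \<Longrightarrow> F t = q t"
    and pc: "p c = q c"
  shows "(F has_real_derivative D) (at c)"
proof -
  have Fc: "F c = q c" using Fq assms(4) by simp
  show ?thesis unfolding has_field_derivative_iff
  proof (rule tendsto_glue[where lo=lo and hi=hi])
    show "((\<lambda>y. (p y - p c) / (y - c)) \<longlongrightarrow> D) (at c)" using p unfolding has_field_derivative_iff .
    show "((\<lambda>y. (q y - q c) / (y - c)) \<longlongrightarrow> D) (at c)" using q unfolding has_field_derivative_iff .
  qed (use assms Fc in auto)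
qed


lemma local_rep:
  assumes inc: "\<forall>i\<in>{1..<n}. x i < x (Suc i)" and n: "2 \<le> n" and t: "t \<in> {x 1..x n}"
  shows "(\<exists>j d. 1 \<le> j \<and> j < n \<and> d > 0 \<and> (\<forall>y\<in>{x 1..x n}. dist y t < d \<longrightarrow> piece_index x n y = j))
         \<or> (\<exists>j. 2 \<le> j \<and> j < n \<and> t = x j)"
proof -
  define J where "J = {i. 1 \<le> i \<and> i < n \<and> x i \<le> t}"
  have finJ: "finite J" unfolding J_def by (rule finite_subset[of _ "{..<n}"]) auto
  have "1 \<in> J" unfolding J_def using n t by auto
  hence neJ: "J \<noteq> {}" by auto
  define j where "j = Max J"
  have jJ: "j \<in> J" unfolding j_def using finJ neJ by simp
  have jmax: "\<And>i. i \<in> J \<Longrightarrow> i \<le> j" unfolding j_def using finJ by simp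
  have j1: "1 \<le> j" "j < n" "x j \<le> t" using jJ unfolding J_def by auto
  show ?thesis
  proof (cases "t = x j")
    case True
    show ?thesis
    proof (cases "j = 1")
      case j1': True
      have "\<forall>y\<in>{x 1..x n}. dist y t < x 2 - x 1 \<longrightarrow> piece_index x n y = 1"
      proof (intro ballI impI)
        fix y assume y: "y \<in> {x 1..x n}" "dist y t < x 2 - x 1"
        have "y < x (Suc 1)" using y True j1' by (auto simp: dist_real_def numeral_2_eq_2)
        thus "piece_index x n y = 1" using piece_index_eq[OF inc, of 1 y] n y by auto
      qed
      moreover have "x 2 - x 1 > 0" using inc n by (auto simp: numeral_2_eq_2)
      ultimately show ?thesis using n by (intro disjI1 exI[of _ 1] exI[of _ "x 2 - x 1"]) auto
    next
      case False
      then show ?thesis using True j1 by (intro disjI2 exI[of _ j]) auto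
    qed
  next
    case False
    hence tj: "x j < t" using j1 by simp
    show ?thesis
    proof (cases "Suc j < n")
      case True
      have "Suc j \<notin> J" using jmax by fastforce
      hence tS: "t < x (Suc j)" using True unfolding J_def by auto
      define d where "d = min (t - x j) (x (Suc j) - t)"
      have "d > 0" using tj tS d_def by simp
      moreover have "\<forall>y\<in>{x 1..x n}. dist y t < d \<longrightarrow> piece_index x n y = j"
      proof (intro ballI impI)
        fix y assume y: "y \<in> {x 1..x n}" "dist y t < d"
        have "x j < y" "y < x (Suc j)" using y d_def by (auto simp: dist_real_def)
        thus "piece_index x n y = j" using piece_index_eq[OF inc, of j y] j1 by auto
      qed
      ultimately show ?thesis using j1 by blast
    next
      case False
      hence jn: "j = n - 1" using j1 by simp
      have "\<forall>y\<in>{x 1..x n}. dist y t < t - x j \<longrightarrow> piece_index x n y = j"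
      proof (intro ballI impI)
        fix y assume y: "y \<in> {x 1..x n}" "dist y t < t - x j"
        have "x (n - 1) \<le> y" using y jn by (auto simp: dist_real_def)
        thus "piece_index x n y = j" using piece_index_last[OF inc n] y jn by auto
      qed
      thus ?thesis using j1 tj by (intro disjI1 exI[of _ j] exI[of _ "t - x j"]) auto
    qed
  qed
qed

lemma pchip_regular:
  assumes inc: "\<forall>i\<in>{1..<n}. x i < x (Suc i)" and n: "2 \<le> n"
    and node: "\<And>j. 2 \<le> j \<Longrightarrow> j < n \<Longrightarrow> j \<noteq> i0 \<Longrightarrow> hp2 x fv dv (j-1) (x j) = hp2 x fv dv j (x j)"
  shows "let S = {x 1..x n} - {x i0}; P = pchip x n fv dv in
       \<exists>P1 P2. (\<forall>t\<in>S. (P has_real_derivative P1 t) (at t within S) \<and>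
                        (P1 has_real_derivative P2 t) (at t within S)) \<and>
               continuous_on S P2"
proof -
  define S where "S = {x 1..x n} - {x i0}"
  define P where "P = pchip x n fv dv"
  define P1 where "P1 t = hp1 x fv dv (piece_index x n t) t" for t
  define P2 where "P2 t = hp2 x fv dv (piece_index x n t) t" for t
  have stp: "step x j \<noteq> 0" if "1 \<le> j" "j < n" for j
    using bspec[OF inc, of j] that by (simp add: step_def)
  have main: "(P has_real_derivative P1 t) (at t within S) \<and> (P1 has_real_derivative P2 t) (at t within S)
      \<and> continuous (at t within S) P2" if tS: "t \<in> S" for t
  proof -
    have t: "t \<in> {x 1..x n}" "t \<noteq> x i0" using tS S_def by auto
    show ?thesis
    using local_rep[OF inc n t(1)]
    proof
      assume "\<exists>j d. 1 \<le> j \<and> j < n \<and> d > 0 \<and> (\<forall>y\<in>{x 1..x n}. dist y t < d \<longrightarrow> piece_index x n y = j)"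
      then obtain j d where j: "1 \<le> j" "j < n" "d > 0" and pj: "\<And>y. y \<in> {x 1..x n} \<Longrightarrow> dist y t < d \<Longrightarrow> piece_index x n y = j"
        by blast
      have pjS: "piece_index x n y = j" if "y \<in> S" "dist y t < d" for y using pj that S_def by auto
      have pt: "piece_index x n t = j" using pjS[OF tS] j by simp
      have h: "step x j \<noteq> 0" using stp j by simp
      have d1: "(P has_real_derivative P1 t) (at t within S)"
      proof (rule has_field_derivative_transform_within[OF _ j(3) tS])
        show "(hermite_piece x fv dv j has_real_derivative P1 t) (at t within S)"
          unfolding P1_def pt by (rule has_field_derivative_at_within[OF hp0_deriv[OF h]])
        show "hermite_piece x fv dv j y = P y" if "y \<in> S" "dist y t < d" for y
          using pjS[OF that] unfolding P_def pchip_def by simp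
      qed
      have d2: "(P1 has_real_derivative P2 t) (at t within S)"
      proof (rule has_field_derivative_transform_within[OF _ j(3) tS])
        show "(hp1 x fv dv j has_real_derivative P2 t) (at t within S)"
          unfolding P2_def pt by (rule has_field_derivative_at_within[OF hp1_deriv[OF h]])
        show "hp1 x fv dv j y = P1 y" if "y \<in> S" "dist y t < d" for y
          using pjS[OF that] unfolding P1_def by simp
      qed
      have c: "continuous (at t within S) P2"
      proof (rule continuous_transform_within[OF _ j(3) tS])
        show "continuous (at t within S) (hp2 x fv dv j)"
          by (rule continuous_at_imp_continuous_at_within) (use hp2_cont[OF h] in \<open>simp add: continuous_on_eq_continuous_at\<close>)
        show "hp2 x fv dv j y = P2 y" if "y \<in> S" "dist y t < d" for y
          using pjS[OF that] unfolding P2_def by simp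
      qed
      show ?thesis using d1 d2 c by blast
    next
      assume "\<exists>j. 2 \<le> j \<and> j < n \<and> t = x j"
      then obtain j where j: "2 \<le> j" "j < n" and tj: "t = x j" by blast
      have ji0: "j \<noteq> i0" using t tj by auto
      have sj: "Suc (j - 1) = j" using j by simp
      have h0: "step x (j-1) \<noteq> 0" and h1: "step x j \<noteq> 0" using stp j by auto
      have "j - 1 \<in> {1..<n}" using j by auto
      hence "x (j-1) < x (Suc (j-1))" using inc by blast
      hence lo: "x (j-1) < x j" unfolding sj .
      have hi: "x j < x (Suc j)" using inc j by auto
      have pl: "piece_index x n y = j - 1" if "x (j-1) < y" "y < x j" for y
        using piece_index_eq[OF inc, of "j-1" y] that j sj by auto
      have pr: "piece_index x n y = j" if "x j \<le> y" "y < x (Suc j)" for y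
        using piece_index_eq[OF inc, of j y] that j by auto
      have pt: "piece_index x n (x j) = j" using pr hi by simp
      note v0 = hp_vals[OF h0, unfolded sj] and v1 = hp_vals[OF h1]
      have d1: "(P has_real_derivative P1 t) (at t)"
        unfolding tj P1_def pt
      proof (rule deriv_glue[where lo="x (j-1)" and hi="x (Suc j)" and p="hermite_piece x fv dv (j-1)" and q="hermite_piece x fv dv j"])
        show "(hermite_piece x fv dv (j - 1) has_real_derivative hp1 x fv dv j (x j)) (at (x j))"
          using hp0_deriv[OF h0, of fv dv "x j"] v0(4) v1(3) by simp
        show "(hermite_piece x fv dv j has_real_derivative hp1 x fv dv j (x j)) (at (x j))"
          by (rule hp0_deriv[OF h1])
        show "x (j-1) < x j" by (rule lo)
        show "x j < x (Suc j)" by (rule hi)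
        show "P y = hermite_piece x fv dv (j-1) y" if "x (j-1) < y" "y < x j" for y
          using pl[OF that] by (simp add: P_def pchip_def)
        show "P y = hermite_piece x fv dv j y" if "x j \<le> y" "y < x (Suc j)" for y
          using pr[OF that] by (simp add: P_def pchip_def)
        show "hermite_piece x fv dv (j-1) (x j) = hermite_piece x fv dv j (x j)"
          using v0(2) v1(1) by simp
      qed
      have d2: "(P1 has_real_derivative P2 t) (at t)"
        unfolding tj P2_def pt
      proof (rule deriv_glue[where lo="x (j-1)" and hi="x (Suc j)" and p="hp1 x fv dv (j-1)" and q="hp1 x fv dv j"])
        show "(hp1 x fv dv (j - 1) has_real_derivative hp2 x fv dv j (x j)) (at (x j))"
          using hp1_deriv[OF h0, of fv dv "x j"] node[OF j ji0] by simp
        show "(hp1 x fv dv j has_real_derivative hp2 x fv dv j (x j)) (at (x j))"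
          by (rule hp1_deriv[OF h1])
        show "x (j-1) < x j" by (rule lo)
        show "x j < x (Suc j)" by (rule hi)
        show "P1 y = hp1 x fv dv (j-1) y" if "x (j-1) < y" "y < x j" for y
          using pl[OF that] by (simp add: P1_def)
        show "P1 y = hp1 x fv dv j y" if "x j \<le> y" "y < x (Suc j)" for y
          using pr[OF that] by (simp add: P1_def)
        show "hp1 x fv dv (j-1) (x j) = hp1 x fv dv j (x j)"
          using v0(4) v1(3) by simp
      qed
      have c: "isCont P2 t"
        unfolding isCont_def tj P2_def pt
      proof (rule tendsto_glue[where lo="x (j-1)" and hi="x (Suc j)" and g="hp2 x fv dv (j-1)" and h="hp2 x fv dv j"])
        show "(hp2 x fv dv (j - 1) \<longlongrightarrow> hp2 x fv dv j (x j)) (at (x j))"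
        proof -
          have "isCont (hp2 x fv dv (j-1)) (x j)"
            using hp2_cont[OF h0, of fv dv] continuous_on_eq_continuous_at[OF open_UNIV] by blast
          thus ?thesis unfolding isCont_def using node[OF j ji0] by simp
        qed
        show "(hp2 x fv dv j \<longlongrightarrow> hp2 x fv dv j (x j)) (at (x j))"
          using hp2_cont[OF h1, of fv dv] unfolding continuous_on_eq_continuous_at[OF open_UNIV] isCont_def by auto
        show "x (j-1) < x j" by (rule lo)
        show "x j < x (Suc j)" by (rule hi)
        show "hp2 x fv dv (piece_index x n y) y = hp2 x fv dv (j-1) y" if "x (j-1) < y" "y < x j" for y
          using pl[OF that] by simp
        show "hp2 x fv dv (piece_index x n y) y = hp2 x fv dv j y" if "x j < y" "y < x (Suc j)" for y
          using pr[of y] that by simp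
      qed
      show ?thesis using d1 d2 c
        by (simp add: has_field_derivative_at_within continuous_at_imp_continuous_at_within)
    qed
  qed
  show ?thesis unfolding Let_def S_def[symmetric] P_def[symmetric]
    using main by (intro exI[of _ P1] exI[of _ P2]) (auto simp: continuous_on_eq_continuous_within)
qed


lemma max_principle:
  fixes e w lamf muf :: "nat \<Rightarrow> real" and n jj :: nat and R :: real
  assumes loc: "\<And>i. 2 \<le> i \<Longrightarrow> i \<le> n - 1 \<Longrightarrow> i \<noteq> jj \<Longrightarrow>
      lamf i \<ge> 0 \<and> muf i \<ge> 0 \<and> lamf i + muf i = 1 \<and>
      2 * \<bar>e i\<bar> \<le> lamf i * \<bar>e (i-1)\<bar> + muf i * \<bar>e (Suc i)\<bar> + R \<and>
      lamf i * w (i-1) + muf i * w (Suc i) + R \<le> 2 * w i"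
    and b1: "\<bar>e 1\<bar> \<le> w 1" and bn: "\<bar>e n\<bar> \<le> w n" and bjj: "\<bar>e jj\<bar> \<le> w jj" and n: "2 \<le> n"
  shows "\<forall>i\<in>{1..n}. \<bar>e i\<bar> \<le> w i"
proof (rule ccontr)
  define g where "g i = \<bar>e i\<bar> - w i" for i
  define M where "M = Max (g ` {1..n})"
  have fin: "finite (g ` {1..n})" by simp
  have ne: "g ` {1..n} \<noteq> {}" using n by auto
  obtain k where k: "k \<in> {1..n}" "g k = M" using Max_in[OF fin ne] unfolding M_def by auto
  have Mge: "g i \<le> M" if "i \<in> {1..n}" for i unfolding M_def using fin that by simp
  assume "\<not> (\<forall>i\<in>{1..n}. \<bar>e i\<bar> \<le> w i)"
  then obtain i where "i \<in> {1..n}" "g i > 0" unfolding g_def by auto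
  hence Mpos: "M > 0" using Mge by fastforce
  have "k \<noteq> 1" using b1 k Mpos g_def by auto
  moreover have "k \<noteq> n" using bn k Mpos g_def by auto
  moreover have kjj: "k \<noteq> jj" using bjj k Mpos g_def by auto
  ultimately have k2: "2 \<le> k" "k \<le> n - 1" using k by auto
  note L = loc[OF k2 kjj]
  have "k - 1 \<in> {1..n}" "Suc k \<in> {1..n}" using k2 by auto
  hence gm: "g (k-1) \<le> M" "g (Suc k) \<le> M" using Mge by auto
  have "2 * g k \<le> lamf k * g (k-1) + muf k * g (Suc k)"
    using L unfolding g_def by (simp add: algebra_simps)
  also have "\<dots> \<le> lamf k * M + muf k * M"
    using L gm by (intro add_mono mult_left_mono) auto
  also have "\<dots> = M" using L by (simp add: distrib_right[symmetric])
  finally show False using k Mpos by simp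
qed

lemma w_ineq:
  fixes lam mu R B z :: real
  assumes "lam \<ge> 0" "mu \<ge> 0" "lam + mu = 1" "B \<ge> 0" "z \<ge> 0"
  shows "lam * (R + B * z) + mu * (R + B * (z/4)) + R \<le> 2 * (R + B * (z/2))"
    and "lam * (R + B * (z/4)) + mu * (R + B * z) + R \<le> 2 * (R + B * (z/2))"
proof -
  have Bz: "B * z \<ge> 0" using assms by simp
  have "lam * (B * z) + mu * (B * z) / 4 \<le> lam * (B * z) + mu * (B * z)"
    using assms Bz by simp
  moreover have "lam * (B * z) + mu * (B * z) = B * z" using assms(3) by (metis distrib_right mult_1)
  moreover have "lam * R + mu * R = R" using assms(3) by (metis distrib_right mult_1)
  ultimately show "lam * (R + B * z) + mu * (R + B * (z/4)) + R \<le> 2 * (R + B * (z/2))"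
    by (simp add: algebra_simps)
  have "lam * (B * z) / 4 + mu * (B * z) \<le> lam * (B * z) + mu * (B * z)"
    using assms Bz by simp
  with \<open>lam * (B * z) + mu * (B * z) = B * z\<close> \<open>lam * R + mu * R = R\<close>
  show "lam * (R + B * (z/4)) + mu * (R + B * z) + R \<le> 2 * (R + B * (z/2))"
    by (simp add: algebra_simps)
qed


lemma comb:
  fixes L T E X Y Z :: real
  assumes "L \<ge> 0" "T \<ge> 0" "E \<le> 8 * L * Y + T * X" "Y \<le> Z" "X \<le> Z"
  shows "E \<le> (8 * L + T) * Z"
proof -
  have "8 * L * Y \<le> 8 * L * Z" using assms by (simp add: mult_left_mono)
  moreover have "T * X \<le> T * Z" using assms by (simp add: mult_left_mono)
  ultimately show ?thesis using assms(3) by (simp add: distrib_right)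
qed

lemma main_lemma:
  fixes a b L T p :: real and Df :: "nat \<Rightarrow> real \<Rightarrow> real"
    and n :: nat and x :: "nat \<Rightarrow> real" and i0 :: nat and ftil :: real and fdot :: "nat \<Rightarrow> real"
  assumes deriv: "\<And>k t. k < 4 \<Longrightarrow> t \<in> {a..b} \<Longrightarrow>
                 (Df k has_real_derivative Df (Suc k) t) (at t within {a..b})"
    and bound4: "\<And>t. t \<in> {a..b} \<Longrightarrow> \<bar>Df 4 t\<bar> \<le> L"
    and LTp: "L > 0" "T > 0" "p > 0"
    and n: "2 \<le> n" and x1: "x 1 = a" and xn: "x n = b" and inc: "\<forall>i\<in>{1..<n}. x i < x (Suc i)"
    and h1: "hmax x n < 1"
    and i0l: "3 - log 2 (hmax x n) < real i0" and i0u: "real i0 < real (n - 1) + log 2 (hmax x n)"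
    and ft: "\<bar>Df 1 (x i0) - ftil\<bar> = T * hmax x n powr p"
    and f1: "fdot 1 = Df 1 (x 1)" and fi0: "fdot i0 = ftil" and fn: "fdot n = Df 1 (x n)"
    and eqs: "\<forall>i. 2 \<le> i \<and> i \<le> n - 1 \<and> i \<noteq> i0 \<longrightarrow>
       (let lam = step x i / (step x (i-1) + step x i);
            mu = step x (i-1) / (step x (i-1) + step x i);
            m = (\<lambda>j. (Df 0 (x (Suc j)) - Df 0 (x j)) / step x j) in
        lam * fdot (i-1) + 2 * fdot i + mu * fdot (Suc i)
          = 3 * (lam * m (i-1) + mu * m i))"
  shows "(\<exists>l0 l1 :: nat. l0 < i0 \<and> i0 < l1 \<and>
       (\<forall>i. 2 \<le> i \<and> i \<le> n - 1 \<longrightarrow>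
          (i \<le> l0 \<longrightarrow> \<bar>fdot i - Df 1 (x i)\<bar> \<le> (8 * L + T) * hmax x n powr (min 3 (p + 1))) \<and>
          (l0 < i \<and> i < l1 \<longrightarrow> \<bar>fdot i - Df 1 (x i)\<bar> \<le> (8 * L + T) * hmax x n powr p) \<and>
          (l1 \<le> i \<longrightarrow> \<bar>fdot i - Df 1 (x i)\<bar> \<le> (8 * L + T) * hmax x n powr (min 3 (p + 1)))))"
proof -
  define h where "h = hmax x n"
  have stpos: "step x j > 0" if "1 \<le> j" "j < n" for j
    using bspec[OF inc, of j] that by (simp add: step_def)
  have hge: "step x j \<le> h" if "1 \<le> j" "j \<le> n - 1" for j
    unfolding h_def hmax_def by (rule Max_ge) (use that in auto)
  have "1 \<le> n - 1" "(1::nat) < n" using n by auto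
  hence hpos: "h > 0" using hge[of 1] stpos[of 1] by force
  have hlt: "h < 1" using h1 h_def by simp
  have xab: "x i \<in> {a..b}" if "1 \<le> i" "i \<le> n" for i
    using x_mono_le[OF inc, of 1 i] x_mono_le[OF inc, of i n] that x1 xn n by auto
  have lneg: "log 2 h < 0" using hpos hlt by simp
  have i0ge: "i0 \<ge> 4" using i0l lneg h_def by simp
  have i0le: "i0 < n - 1" using i0u lneg h_def by simp
  define R where "R = 8 * L * h^3"
  define B where "B = T * h powr p"
  define e where "e i = fdot i - Df 1 (x i)" for i
  define lamf where "lamf i = step x i / (step x (i-1) + step x i)" for i
  define muf where "muf i = step x (i-1) / (step x (i-1) + step x i)" for i
  define m where "m j = (Df 0 (x (Suc j)) - Df 0 (x j)) / step x j" for j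
  define dd where "dd i = (if i \<le> i0 then i0 - i else i - i0)" for i
  define w where "w i = R + B * (1/2) ^ (dd i)" for i
  have R0: "R \<ge> 0" and B0: "B \<ge> 0" using LTp hpos unfolding R_def B_def by auto
  have resid: "\<bar>lamf i * Df 1 (x (i-1)) + 2 * Df 1 (x i) + muf i * Df 1 (x (Suc i))
        - 3 * (lamf i * m (i-1) + muf i * m i)\<bar> \<le> R" if i: "2 \<le> i" "i \<le> n - 1" for i
  proof -
    define u where "u = step x (i-1)"
    define v where "v = step x i"
    have sj: "Suc (i-1) = i" using i by simp
    have u0: "u > 0" unfolding u_def using stpos[of "i-1"] i by simp
    have v0: "v > 0" unfolding v_def using stpos[of i] i by simp
    have uh: "u \<le> h" unfolding u_def using hge[of "i-1"] i by simp
    have vh: "v \<le> h" unfolding v_def using hge[of i] i by simp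
    have xi: "x i \<in> {a..b}" "x (i-1) \<in> {a..b}" "x (Suc i) \<in> {a..b}" using xab i by auto
    have du: "x (i-1) - x i = -u" unfolding u_def step_def sj by simp
    have dv: "x (Suc i) - x i = v" unfolding v_def step_def by simp
    note tp = taylor_bounds[OF deriv bound4 xi(1) xi(3), unfolded dv]
    note tm = taylor_bounds[OF deriv bound4 xi(1) xi(2), unfolded du]
    have Ep: "\<bar>Df 0 (x (Suc i)) - (Df 0 (x i) + Df 1 (x i) * v + Df 2 (x i) * v^2/2 + Df 3 (x i) * v^3/6)\<bar> \<le> L * v^4"
      using tp(2) v0 by simp
    have Em: "\<bar>Df 0 (x (i-1)) - (Df 0 (x i) + Df 1 (x i) * (-u) + Df 2 (x i) * (-u)^2/2 + Df 3 (x i) * (-u)^3/6)\<bar> \<le> L * u^4"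
      using tm(2) u0 by simp
    have Gp: "\<bar>Df 1 (x (Suc i)) - (Df 1 (x i) + Df 2 (x i) * v + Df 3 (x i) * v^2/2)\<bar> \<le> L * v^3"
      using tp(1) v0 by simp
    have Gm: "\<bar>Df 1 (x (i-1)) - (Df 1 (x i) + Df 2 (x i) * (-u) + Df 3 (x i) * (-u)^2/2)\<bar> \<le> L * u^3"
      using tm(1) u0 by simp
    have r: "\<bar>v/(u+v) * Df 1 (x (i-1)) + 2 * Df 1 (x i) + u/(u+v) * Df 1 (x (Suc i))
          - 3 * (v/(u+v) * ((Df 0 (x i) - Df 0 (x (i-1)))/u) + u/(u+v) * ((Df 0 (x (Suc i)) - Df 0 (x i))/v))\<bar> \<le> 8 * L * h^3"
      by (rule residual[OF u0 v0 uh vh Ep Em Gp Gm])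
    have "m (i-1) = (Df 0 (x i) - Df 0 (x (i-1)))/u" unfolding m_def u_def sj ..
    moreover have "m i = (Df 0 (x (Suc i)) - Df 0 (x i))/v" unfolding m_def v_def ..
    moreover have "lamf i = v/(u+v)" "muf i = u/(u+v)" unfolding lamf_def muf_def u_def v_def by simp_all
    ultimately show ?thesis using r unfolding R_def by simp
  qed
  have eqi: "lamf i * fdot (i-1) + 2 * fdot i + muf i * fdot (Suc i) = 3 * (lamf i * m (i-1) + muf i * m i)"
    if "2 \<le> i" "i \<le> n - 1" "i \<noteq> i0" for i
    using eqs that unfolding Let_def lamf_def muf_def m_def by blast
  have bound: "\<forall>i\<in>{1..n}. \<bar>e i\<bar> \<le> w i"
  proof (rule max_principle[where lamf=lamf and muf=muf and R=R and jj=i0])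
    fix i assume i: "2 \<le> i" "i \<le> n - 1" "i \<noteq> i0"
    have u0: "step x (i-1) > 0" using stpos[of "i-1"] i by simp
    have v0: "step x i > 0" using stpos[of i] i by simp
    have l0: "lamf i \<ge> 0" "muf i \<ge> 0" unfolding lamf_def muf_def using u0 v0 by simp_all
    have "lamf i + muf i = (step x i + step x (i-1)) / (step x (i-1) + step x i)"
      unfolding lamf_def muf_def by (simp add: add_divide_distrib)
    hence l1: "lamf i + muf i = 1" using u0 v0 by (simp add: add.commute)
    have S: "\<bar>lamf i * e (i-1) + 2 * e i + muf i * e (Suc i)\<bar> \<le> R"
    proof -
      have "lamf i * e (i-1) + 2 * e i + muf i * e (Suc i)
          = - (lamf i * Df 1 (x (i-1)) + 2 * Df 1 (x i) + muf i * Df 1 (x (Suc i))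
        - 3 * (lamf i * m (i-1) + muf i * m i))"
        using eqi[OF i] unfolding e_def by (simp add: algebra_simps)
      hence "\<bar>lamf i * e (i-1) + 2 * e i + muf i * e (Suc i)\<bar> = \<bar>lamf i * Df 1 (x (i-1)) + 2 * Df 1 (x i) + muf i * Df 1 (x (Suc i))
        - 3 * (lamf i * m (i-1) + muf i * m i)\<bar>" by (simp only: abs_minus_cancel)
      thus ?thesis using resid[OF i(1,2)] by linarith
    qed
    have a1: "\<bar>lamf i * e (i-1)\<bar> = lamf i * \<bar>e (i-1)\<bar>" using l0 by (simp add: abs_mult)
    have a2: "\<bar>muf i * e (Suc i)\<bar> = muf i * \<bar>e (Suc i)\<bar>" using l0 by (simp add: abs_mult)
    have E: "2 * \<bar>e i\<bar> \<le> lamf i * \<bar>e (i-1)\<bar> + muf i * \<bar>e (Suc i)\<bar> + R"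
      using S a1 a2 by linarith
    have W: "lamf i * w (i-1) + muf i * w (Suc i) + R \<le> 2 * w i"
    proof (cases "i < i0")
      case True
      define z where "z = (1/2::real) ^ (i0 - Suc i)"
      have z0: "z \<ge> 0" unfolding z_def by simp
      have "dd i = Suc (i0 - Suc i)" "dd (i-1) = Suc (Suc (i0 - Suc i))" "dd (Suc i) = i0 - Suc i"
        unfolding dd_def using True i by auto
      hence "w i = R + B * (z/2)" "w (i-1) = R + B * (z/4)" "w (Suc i) = R + B * z"
        unfolding w_def z_def by simp_all
      thus ?thesis using w_ineq(2)[OF l0 l1 B0 z0, of R] by simp
    next
      case False
      hence gt: "i0 < i" using i by simp
      define z where "z = (1/2::real) ^ (i - 1 - i0)"
      have z0: "z \<ge> 0" unfolding z_def by simp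
      have "dd i = Suc (i - 1 - i0)" "dd (i-1) = i - 1 - i0" "dd (Suc i) = Suc (Suc (i - 1 - i0))"
        unfolding dd_def using gt i by auto
      hence "w i = R + B * (z/2)" "w (i-1) = R + B * z" "w (Suc i) = R + B * (z/4)"
        unfolding w_def z_def by simp_all
      thus ?thesis using w_ineq(1)[OF l0 l1 B0 z0, of R] by simp
    qed
    show "lamf i \<ge> 0 \<and> muf i \<ge> 0 \<and> lamf i + muf i = 1 \<and>
      2 * \<bar>e i\<bar> \<le> lamf i * \<bar>e (i-1)\<bar> + muf i * \<bar>e (Suc i)\<bar> + R \<and>
      lamf i * w (i-1) + muf i * w (Suc i) + R \<le> 2 * w i" using l0 l1 E W by blast
  next
    show "\<bar>e 1\<bar> \<le> w 1" unfolding e_def w_def using f1 R0 B0 by simp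
    show "\<bar>e n\<bar> \<le> w n" unfolding e_def w_def using fn R0 B0 by simp
    show "\<bar>e i0\<bar> \<le> w i0" unfolding e_def w_def dd_def using fi0 ft R0 B0 h_def B_def by (simp add: abs_minus_commute)
  qed (use n in simp)
  have eb: "\<bar>fdot i - Df 1 (x i)\<bar> \<le> 8 * L * h powr 3 + T * (h powr p * (1/2) ^ dd i)" if "1 \<le> i" "i \<le> n" for i
    using bound that hpos unfolding e_def w_def R_def B_def by (simp add: mult.assoc)
  have half: "(1/2::real) ^ d \<le> 1" for d by (simp add: power_le_one)
  have eb1: "\<bar>fdot i - Df 1 (x i)\<bar> \<le> 8 * L * h powr 3 + T * h powr p" if "1 \<le> i" "i \<le> n" for i
  proof -
    have "h powr p * (1/2) ^ dd i \<le> h powr p * 1" using half by (intro mult_left_mono) auto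
    hence "T * (h powr p * (1/2) ^ dd i) \<le> T * h powr p" using LTp by (simp add: mult_left_mono)
    thus ?thesis using eb[OF that] by linarith
  qed
  have L0: "L \<ge> 0" "T \<ge> 0" using LTp by auto
  have h01: "0 \<le> h" "h \<le> 1" using hpos hlt by auto
  show ?thesis
  proof (cases "p \<le> 3")
    case True
    define k0 where "k0 = nat \<lceil>- log 2 h\<rceil>"
    have k0r: "real k0 \<ge> - log 2 h" unfolding k0_def by linarith
    have k01: "k0 \<ge> 1" unfolding k0_def using lneg by linarith
    have "2 powr (- log 2 h) \<le> 2 powr (real k0)" using k0r by simp
    moreover have "2 powr (- log 2 h) = 1 / h" using hpos by (simp add: powr_minus divide_inverse)
    moreover have "2 powr (real k0) = (2::real) ^ k0" by (simp add: powr_realpow)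
    ultimately have "1 / h \<le> 2 ^ k0" by simp
    hence "1 \<le> h * 2 ^ k0" using hpos by (simp add: divide_le_eq mult.commute)
    hence k0h: "(1/2::real) ^ k0 \<le> h" by (simp add: power_one_over divide_le_eq mult.commute)
    have far: "\<bar>fdot i - Df 1 (x i)\<bar> \<le> (8 * L + T) * h powr (min 3 (p + 1))"
      if i: "1 \<le> i" "i \<le> n" and d: "k0 \<le> dd i" for i
    proof (rule comb[OF L0 eb[OF i]])
      show "h powr 3 \<le> h powr (min 3 (p + 1))" using h01 by (intro powr_mono') auto
      have "(1/2::real) ^ dd i \<le> (1/2) ^ k0" using d by (intro power_decreasing) auto
      hence "(1/2::real) ^ dd i \<le> h" using k0h by linarith
      hence "h powr p * (1/2) ^ dd i \<le> h powr p * h" by (intro mult_left_mono) auto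
      also have "\<dots> = h powr (p + 1)" using hpos by (simp add: powr_add)
      also have "\<dots> \<le> h powr (min 3 (p + 1))" using h01 by (intro powr_mono') auto
      finally show "h powr p * (1/2) ^ dd i \<le> h powr (min 3 (p + 1))" .
    qed
    have A: "\<forall>i. 2 \<le> i \<and> i \<le> n - 1 \<longrightarrow>
          (i \<le> i0 - k0 \<longrightarrow> \<bar>fdot i - Df 1 (x i)\<bar> \<le> (8 * L + T) * h powr (min 3 (p + 1))) \<and>
          (i0 - k0 < i \<and> i < i0 + k0 \<longrightarrow> \<bar>fdot i - Df 1 (x i)\<bar> \<le> (8 * L + T) * h powr p) \<and>
          (i0 + k0 \<le> i \<longrightarrow> \<bar>fdot i - Df 1 (x i)\<bar> \<le> (8 * L + T) * h powr (min 3 (p + 1)))"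
    proof (intro allI impI conjI)
      fix i assume i: "2 \<le> i \<and> i \<le> n - 1"
      hence i': "1 \<le> i" "i \<le> n" by auto
      show "\<bar>fdot i - Df 1 (x i)\<bar> \<le> (8 * L + T) * h powr (min 3 (p + 1))" if "i \<le> i0 - k0"
      proof -
        have ii: "i \<le> i0" "k0 \<le> i0 - i" using that i by arith+
        hence "dd i = i0 - i" by (simp add: dd_def)
        hence "k0 \<le> dd i" using ii by simp
        thus ?thesis by (rule far[OF i'])
      qed
      show "\<bar>fdot i - Df 1 (x i)\<bar> \<le> (8 * L + T) * h powr (min 3 (p + 1))" if "i0 + k0 \<le> i"
      proof -
        have ii: "\<not> i \<le> i0" "k0 \<le> i - i0" using that k01 by arith+
        hence "dd i = i - i0" by (simp add: dd_def)
        hence "k0 \<le> dd i" using ii by simp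
        thus ?thesis by (rule far[OF i'])
      qed
      show "\<bar>fdot i - Df 1 (x i)\<bar> \<le> (8 * L + T) * h powr p" if "i0 - k0 < i \<and> i < i0 + k0"
      proof -
        have "h powr 3 \<le> h powr p" using h01 True by (intro powr_mono') auto
        thus ?thesis by (rule comb[OF L0 eb1[OF i']]) simp
      qed
    qed
    have "i0 - k0 < i0" "i0 < i0 + k0" using k01 i0ge by auto
    thus ?thesis
      apply -
      apply (rule exI[of _ "i0 - k0"])
      apply (rule exI[of _ "i0 + k0"])
      using A h_def by simp
  next
    case False
    have A: "\<forall>i. 2 \<le> i \<and> i \<le> n - 1 \<longrightarrow>
          (i \<le> i0 - 1 \<longrightarrow> \<bar>fdot i - Df 1 (x i)\<bar> \<le> (8 * L + T) * h powr (min 3 (p + 1))) \<and>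
          (i0 - 1 < i \<and> i < i0 + 1 \<longrightarrow> \<bar>fdot i - Df 1 (x i)\<bar> \<le> (8 * L + T) * h powr p) \<and>
          (i0 + 1 \<le> i \<longrightarrow> \<bar>fdot i - Df 1 (x i)\<bar> \<le> (8 * L + T) * h powr (min 3 (p + 1)))"
    proof (intro allI impI conjI)
      fix i assume i: "2 \<le> i \<and> i \<le> n - 1"
      hence i': "1 \<le> i" "i \<le> n" by auto
      have mn: "min 3 (p + 1) = 3" using False by simp
      have out: "\<bar>fdot i - Df 1 (x i)\<bar> \<le> (8 * L + T) * h powr (min 3 (p + 1))"
      proof -
        have "h powr p \<le> h powr 3" using h01 False by (intro powr_mono') auto
        thus ?thesis unfolding mn by (rule comb[OF L0 eb1[OF i'], rotated]) simp
      qed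
      show "\<bar>fdot i - Df 1 (x i)\<bar> \<le> (8 * L + T) * h powr (min 3 (p + 1))" if "i \<le> i0 - 1"
        using out .
      show "\<bar>fdot i - Df 1 (x i)\<bar> \<le> (8 * L + T) * h powr (min 3 (p + 1))" if "i0 + 1 \<le> i"
        using out .
      show "\<bar>fdot i - Df 1 (x i)\<bar> \<le> (8 * L + T) * h powr p" if "i0 - 1 < i \<and> i < i0 + 1"
      proof -
        have "i = i0" using that i0ge by auto
        hence "\<bar>fdot i - Df 1 (x i)\<bar> = T * h powr p" using fi0 ft h_def by (simp add: abs_minus_commute)
        also have "\<dots> \<le> (8 * L + T) * h powr p" using L0 hpos by (simp add: distrib_right)
        finally show ?thesis .
      qed
    qed
    have "i0 - 1 < i0" "i0 < i0 + 1" using i0ge by auto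
    thus ?thesis
      apply -
      apply (rule exI[of _ "i0 - 1"])
      apply (rule exI[of _ "i0 + 1"])
      using A h_def by simp
  qed
qed


lemma reg_all:
  fixes Df :: "nat \<Rightarrow> real \<Rightarrow> real"
  assumes n: "2 \<le> n" and inc: "\<forall>i\<in>{1..<n}. x i < x (Suc i)"
    and eqs: "\<forall>i. 2 \<le> i \<and> i \<le> n - 1 \<and> i \<noteq> i0 \<longrightarrow>
       (let lam = step x i / (step x (i-1) + step x i);
            mu = step x (i-1) / (step x (i-1) + step x i);
            m = (\<lambda>j. (Df 0 (x (Suc j)) - Df 0 (x j)) / step x j) in
        lam * fdot (i-1) + 2 * fdot i + mu * fdot (Suc i)
          = 3 * (lam * m (i-1) + mu * m i))"
  shows "let S = {x 1..x n} - {x i0}; P = pchip x n (\<lambda>j. Df 0 (x j)) fdot in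
       \<exists>P1 P2. (\<forall>t\<in>S. (P has_real_derivative P1 t) (at t within S) \<and>
                        (P1 has_real_derivative P2 t) (at t within S)) \<and>
               continuous_on S P2"
proof (rule pchip_regular[OF inc n])
  fix j assume j: "2 \<le> j" "j < n" "j \<noteq> i0"
  define u where "u = step x (j-1)"
  define v where "v = step x j"
  have sj: "Suc (j-1) = j" using j by simp
  have "j - 1 \<in> {1..<n}" using j by auto
  hence "x (j-1) < x (Suc (j-1))" using inc by blast
  hence u0: "u > 0" unfolding u_def step_def by simp
  have v0: "v > 0" unfolding v_def step_def using bspec[OF inc, of j] j by simp
  have e: "v/(u+v) * fdot (j-1) + 2 * fdot j + u/(u+v) * fdot (Suc j)
      = 3 * (v/(u+v) * ((Df 0 (x j) - Df 0 (x (j-1)))/u) + u/(u+v) * ((Df 0 (x (Suc j)) - Df 0 (x j))/v))"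
    using eqs j unfolding Let_def u_def v_def by (simp add: sj)
  have nm: "(6 * Df 0 (x (j-1)) - 6 * Df 0 (x j) + 2 * u * fdot (j-1) + 4 * u * fdot j) / u^2
      = (6 * Df 0 (x (Suc j)) - 6 * Df 0 (x j) - 4 * v * fdot j - 2 * v * fdot (Suc j)) / v^2"
    by (rule node_match[OF u0 v0 e])
  have h0: "step x (j-1) \<noteq> 0" "step x j \<noteq> 0" using u0 v0 u_def v_def by auto
  show "hp2 x (\<lambda>j. Df 0 (x j)) fdot (j - 1) (x j) = hp2 x (\<lambda>j. Df 0 (x j)) fdot j (x j)"
    using hp_vals(6)[OF h0(1), of "\<lambda>j. Df 0 (x j)" fdot, unfolded sj] hp_vals(5)[OF h0(2), of "\<lambda>j. Df 0 (x j)" fdot]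
      nm unfolding u_def v_def by (simp add: algebra_simps)
qed

theorem corollary1:
  fixes a b L K T p :: real
    and Df :: "nat \<Rightarrow> real \<Rightarrow> real"
  assumes "a < b"
    and deriv: "\<And>k t. k < 4 \<Longrightarrow> t \<in> {a..b} \<Longrightarrow>
                 (Df k has_real_derivative Df (Suc k) t) (at t within {a..b})"
    and cont4: "continuous_on {a..b} (Df 4)"
    and "L > 0" and bound4: "\<And>t. t \<in> {a..b} \<Longrightarrow> \<bar>Df 4 t\<bar> \<le> L"
    and "K > 0" and "T > 0" and "p > 0"
  shows "\<exists>C > 0. \<forall>(n::nat) (x::nat \<Rightarrow> real) (i0::nat) (ftil::real) (fdot::nat \<Rightarrow> real).
    2 \<le> n \<and> x 1 = a \<and> x n = b \<and> (\<forall>i\<in>{1..<n}. x i < x (Suc i)) \<and>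
    hmax x n < 1 \<and>
    3 - log 2 (hmax x n) < real i0 \<and> real i0 < real (n - 1) + log 2 (hmax x n) \<and>
    \<bar>Df 1 (x i0) - ftil\<bar> = T * hmax x n powr p \<and>
    (\<forall>i\<in>{1..n-1}. hmax x n / step x i \<le> K) \<and>
    fdot 1 = Df 1 (x 1) \<and> fdot i0 = ftil \<and> fdot n = Df 1 (x n) \<and>
    (\<forall>i. 2 \<le> i \<and> i \<le> n - 1 \<and> i \<noteq> i0 \<longrightarrow>
       (let lam = step x i / (step x (i-1) + step x i);
            mu = step x (i-1) / (step x (i-1) + step x i);
            m = (\<lambda>j. (Df 0 (x (Suc j)) - Df 0 (x j)) / step x j) in
        lam * fdot (i-1) + 2 * fdot i + mu * fdot (Suc i)
          = 3 * (lam * m (i-1) + mu * m i)))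
    \<longrightarrow>
    (\<exists>l0 l1 :: nat. l0 < i0 \<and> i0 < l1 \<and>
       (\<forall>i. 2 \<le> i \<and> i \<le> n - 1 \<longrightarrow>
          (i \<le> l0 \<longrightarrow> \<bar>fdot i - Df 1 (x i)\<bar> \<le> C * hmax x n powr (min 3 (p + 1))) \<and>
          (l0 < i \<and> i < l1 \<longrightarrow> \<bar>fdot i - Df 1 (x i)\<bar> \<le> C * hmax x n powr p) \<and>
          (l1 \<le> i \<longrightarrow> \<bar>fdot i - Df 1 (x i)\<bar> \<le> C * hmax x n powr (min 3 (p + 1))))) \<and>
    (let S = {x 1..x n} - {x i0}; P = pchip x n (\<lambda>j. Df 0 (x j)) fdot in
       \<exists>P1 P2. (\<forall>t\<in>S. (P has_real_derivative P1 t) (at t within S) \<and>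
                        (P1 has_real_derivative P2 t) (at t within S)) \<and>
               continuous_on S P2)"
proof (rule exI[of _ "8 * L + T"], intro conjI allI impI)
  show "8 * L + T > 0" using \<open>L > 0\<close> \<open>T > 0\<close> by simp
next
  fix n x i0 ftil fdot
  assume H: "2 \<le> n \<and> x 1 = a \<and> x n = b \<and> (\<forall>i\<in>{1..<n}. x i < x (Suc i)) \<and>
    hmax x n < 1 \<and>
    3 - log 2 (hmax x n) < real i0 \<and> real i0 < real (n - 1) + log 2 (hmax x n) \<and>
    \<bar>Df 1 (x i0) - ftil\<bar> = T * hmax x n powr p \<and>
    (\<forall>i\<in>{1..n-1}. hmax x n / step x i \<le> K) \<and>
    fdot 1 = Df 1 (x 1) \<and> fdot i0 = ftil \<and> fdot n = Df 1 (x n) \<and>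
    (\<forall>i. 2 \<le> i \<and> i \<le> n - 1 \<and> i \<noteq> i0 \<longrightarrow>
       (let lam = step x i / (step x (i-1) + step x i);
            mu = step x (i-1) / (step x (i-1) + step x i);
            m = (\<lambda>j. (Df 0 (x (Suc j)) - Df 0 (x j)) / step x j) in
        lam * fdot (i-1) + 2 * fdot i + mu * fdot (Suc i)
          = 3 * (lam * m (i-1) + mu * m i)))"
  show "\<exists>l0 l1 :: nat. l0 < i0 \<and> i0 < l1 \<and>
       (\<forall>i. 2 \<le> i \<and> i \<le> n - 1 \<longrightarrow>
          (i \<le> l0 \<longrightarrow> \<bar>fdot i - Df 1 (x i)\<bar> \<le> (8 * L + T) * hmax x n powr (min 3 (p + 1))) \<and>
          (l0 < i \<and> i < l1 \<longrightarrow> \<bar>fdot i - Df 1 (x i)\<bar> \<le> (8 * L + T) * hmax x n powr p) \<and>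
          (l1 \<le> i \<longrightarrow> \<bar>fdot i - Df 1 (x i)\<bar> \<le> (8 * L + T) * hmax x n powr (min 3 (p + 1))))"
    using H by (intro main_lemma[OF deriv bound4 \<open>L > 0\<close> \<open>T > 0\<close> \<open>p > 0\<close>, where ftil=ftil]) blast+
  show "let S = {x 1..x n} - {x i0}; P = pchip x n (\<lambda>j. Df 0 (x j)) fdot in
       \<exists>P1 P2. (\<forall>t\<in>S. (P has_real_derivative P1 t) (at t within S) \<and>
                        (P1 has_real_derivative P2 t) (at t within S)) \<and>
               continuous_on S P2"
    using H by (intro reg_all) blast+
qed


end
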